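(* For $(\alpha,\beta)\in\mathbb{R}^2$, let $\mathfrak{m}_{\alpha,\beta}$ be the $8$-dimensional real Lie algebra with a basis $\{v^1,\dots,v^8\}$ of its dual satisfying $$dv^1=dv^2=dv^3=0,\quad dv^4=v^{13},\quad dv^5=v^{23},\quad dv^6=v^{14}+v^{25}-v^{35},$$ $$dv^7=\alpha v^{12}+v^{15}+v^{24}+v^{34},\quad dv^8=v^{16}-2\beta v^{25}+v^{27}-\beta v^{35}-v^{45},$$ and let $\{v'^1,\dots,v'^8\}$ be the analogous basis of $\mathfrak{m}_{\alpha',\beta'}^*$. Suppose $f:\mathfrak{m}_{\alpha,\beta}\to\mathfrak{m}_{\alpha',\beta'}$ is a Lie algebra isomorphism and let $F:\bigwedge^*\mathfrak{m}_{\alpha',\beta'}^*\to\bigwedge^*\mathfrak{m}_{\alpha,\beta}^*$ be the extension of its dual, written $F(v'^i)=\sum_{j=1}^8\lambda^i_j v^j$. Then $$\alpha'=\pm\lambda^1_1\,\alpha,\qquad \beta'=\lambda^1_1\,\beta.$$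
   Context: $v^{ij}=v^i\wedge v^j$ and $d$ is the Chevalley–Eilenberg differential; $F$ commutes with $d$. *)

theory Defs
  imports "HOL-Analysis.Analysis"
begin

text \<open>The Lie algebra m_{alpha,beta} is modelled on real^8 with standard basis e_1..e_8
  (axis i 1), dual to v^1..v^8 (coordinate functionals x $ i).  Note: in the numeral
  type 8 the index 8 is the residue 0, distinct from 1..7.\<close>

definition wedge2 :: "8 \<Rightarrow> 8 \<Rightarrow> real^8 \<Rightarrow> real^8 \<Rightarrow> real" where
  "wedge2 i j x y = x $ i * y $ j - x $ j * y $ i"

definition dv :: "real \<Rightarrow> real \<Rightarrow> 8 \<Rightarrow> real^8 \<Rightarrow> real^8 \<Rightarrow> real" where
  "dv \<alpha> \<beta> k x y =
    (if k = 4 then wedge2 1 3 x y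
     else if k = 5 then wedge2 2 3 x y
     else if k = 6 then wedge2 1 4 x y + wedge2 2 5 x y - wedge2 3 5 x y
     else if k = 7 then \<alpha> * wedge2 1 2 x y + wedge2 1 5 x y + wedge2 2 4 x y + wedge2 3 4 x y
     else if k = 8 then wedge2 1 6 x y - 2 * \<beta> * wedge2 2 5 x y + wedge2 2 7 x y
                        - \<beta> * wedge2 3 5 x y - wedge2 4 5 x y
     else 0)"

text \<open>Lie bracket determined by the Chevalley--Eilenberg convention d theta (x,y) = - theta([x,y]).\<close>
definition mbr :: "real \<Rightarrow> real \<Rightarrow> real^8 \<Rightarrow> real^8 \<Rightarrow> real^8" where
  "mbr \<alpha> \<beta> x y = (\<chi> k. - dv \<alpha> \<beta> k x y)"

definition lie_iso :: "real \<Rightarrow> real \<Rightarrow> real \<Rightarrow> real \<Rightarrow> (real^8 \<Rightarrow> real^8) \<Rightarrow> bool" where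
  "lie_iso \<alpha> \<beta> \<alpha>' \<beta>' f \<longleftrightarrow> linear f \<and> bij f \<and>
     (\<forall>x y. f (mbr \<alpha> \<beta> x y) = mbr \<alpha>' \<beta>' (f x) (f y))"

text \<open>lambda^i_j with F(v'^i) = sum_j lambda^i_j v^j, F the dual of f: lambda^i_j = v'^i(f e_j).\<close>
definition lam :: "(real^8 \<Rightarrow> real^8) \<Rightarrow> 8 \<Rightarrow> 8 \<Rightarrow> real" where
  "lam f i j = f (axis j 1) $ i"

end

theory Submission
  imports Defs
begin

lemma u8: "(UNIV::8 set) = {1,2,3,4,5,6,7,8}"
proof -
  have c: "card {1,2,3,4,5,6,7,8::8} = 8" by simp
  have "{1,2,3,4,5,6,7,8::8} = UNIV"
    by (rule card_subset_eq) (simp_all add: c)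
  then show ?thesis by simp
qed

lemma comp: assumes "linear f" shows "(f x) $ k = (\<Sum>j\<in>UNIV. x $ j * lam f k j)"
  using Cartesian_Space.linear_componentwise[of f x k] assms
  unfolding linear_matrix_vector_mul_eq lam_def by blast

lemma E: assumes "lie_iso \<alpha> \<beta> \<alpha>' \<beta>' f"
  shows "dv \<alpha>' \<beta>' k (f (axis i 1)) (f (axis j 1)) = (\<Sum>m\<in>UNIV. lam f k m * dv \<alpha> \<beta> m (axis i 1) (axis j 1))"
proof -
  have l: "linear f" and h: "f (mbr \<alpha> \<beta> (axis i 1) (axis j 1)) = mbr \<alpha>' \<beta>' (f (axis i 1)) (f (axis j 1))"
    using assms unfolding lie_iso_def by auto
  have "f (mbr \<alpha> \<beta> (axis i 1) (axis j 1)) $ k = (\<Sum>m\<in>UNIV. (- dv \<alpha> \<beta> m (axis i 1) (axis j 1)) * lam f k m)"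
    using comp[OF l] by (simp add: mbr_def)
  also have "\<dots> = - (\<Sum>m\<in>UNIV. lam f k m * dv \<alpha> \<beta> m (axis i 1) (axis j 1))"
    by (simp add: sum_negf mult.commute)
  finally show ?thesis using h by (simp add: mbr_def)
qed

lemma dz: "a = b \<Longrightarrow> a - b = (0::real)" by simp

lemma signcase: fixes a1 b1 a2 b2 :: real
  assumes "(a2+b2)^2 = (a1+b1)^2" "(a2-b2)^2 = (a1-b1)^2" "a1*b2 - a2*b1 \<noteq> 0"
  shows "\<exists>e. (e = 1 \<or> e = -1) \<and> a2 = e*b1 \<and> b2 = e*a1"
proof -
  from assms(1) have o1: "a2+b2 = a1+b1 \<or> a2+b2 = -(a1+b1)" by (simp add: power2_eq_iff)
  from assms(2) have o2: "a2-b2 = a1-b1 \<or> a2-b2 = -(a1-b1)" by (simp add: power2_eq_iff)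
  from o1 o2 show ?thesis
  proof (elim disjE)
    assume "a2+b2 = a1+b1" "a2-b2 = a1-b1"
    then have "a2 = a1" "b2 = b1" by linarith+
    then show ?thesis using assms(3) by (simp add: mult.commute)
  next
    assume "a2+b2 = a1+b1" "a2-b2 = -(a1-b1)"
    then have "a2 = b1" "b2 = a1" by linarith+
    then show ?thesis by (intro exI[of _ 1]) simp
  next
    assume "a2+b2 = -(a1+b1)" "a2-b2 = a1-b1"
    then have "a2 = -b1" "b2 = -a1" by linarith+
    then show ?thesis by (intro exI[of _ "-1"]) simp
  next
    assume "a2+b2 = -(a1+b1)" "a2-b2 = -(a1-b1)"
    then have "a2 = -a1" "b2 = -b1" by linarith+
    then show ?thesis using assms(3) by (simp add: mult.commute)
  qed
qed

definition det3 :: "real \<Rightarrow> real \<Rightarrow> real \<Rightarrow> real \<Rightarrow> real \<Rightarrow> real \<Rightarrow> real \<Rightarrow> real \<Rightarrow> real \<Rightarrow> real" where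
 "det3 a11 a12 a13 a21 a22 a23 a31 a32 a33 = a11*(a22*a33-a23*a32) - a12*(a21*a33-a23*a31) + a13*(a21*a32-a22*a31)"

lemma det3_mul: "det3 a11 a12 a13 a21 a22 a23 a31 a32 a33 * det3 x11 x12 x13 x21 x22 x23 x31 x32 x33 =
  det3 (a11*x11+a12*x21+a13*x31) (a11*x12+a12*x22+a13*x32) (a11*x13+a12*x23+a13*x33)
   (a21*x11+a22*x21+a23*x31) (a21*x12+a22*x22+a23*x32) (a21*x13+a22*x23+a23*x33)
   (a31*x11+a32*x21+a33*x31) (a31*x12+a32*x22+a33*x32) (a31*x13+a32*x23+a33*x33)"
  unfolding det3_def by algebra

theorem lemma3p6:
  fixes \<alpha> \<beta> \<alpha>' \<beta>' :: real and f :: "real^8 \<Rightarrow> real^8"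
  assumes "lie_iso \<alpha> \<beta> \<alpha>' \<beta>' f"
  shows "(\<alpha>' = lam f 1 1 * \<alpha> \<or> \<alpha>' = - (lam f 1 1 * \<alpha>)) \<and> \<beta>' = lam f 1 1 * \<beta>"
proof -
  note A = assms
  have lin: "linear f" and bj: "bij f" using A unfolding lie_iso_def by auto

  note i113 = E[OF A, of 1 1 3, unfolded u8, simplified dv_def wedge2_def lam_def[symmetric] axis_nth, simplified axis_def, simplified]
  note i114 = E[OF A, of 1 1 4, unfolded u8, simplified dv_def wedge2_def lam_def[symmetric] axis_nth, simplified axis_def, simplified]
  note i115 = E[OF A, of 1 1 5, unfolded u8, simplified dv_def wedge2_def lam_def[symmetric] axis_nth, simplified axis_def, simplified]
  note i116 = E[OF A, of 1 1 6, unfolded u8, simplified dv_def wedge2_def lam_def[symmetric] axis_nth, simplified axis_def, simplified]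
  note i123 = E[OF A, of 1 2 3, unfolded u8, simplified dv_def wedge2_def lam_def[symmetric] axis_nth, simplified axis_def, simplified]
  note i213 = E[OF A, of 2 1 3, unfolded u8, simplified dv_def wedge2_def lam_def[symmetric] axis_nth, simplified axis_def, simplified]
  note i214 = E[OF A, of 2 1 4, unfolded u8, simplified dv_def wedge2_def lam_def[symmetric] axis_nth, simplified axis_def, simplified]
  note i215 = E[OF A, of 2 1 5, unfolded u8, simplified dv_def wedge2_def lam_def[symmetric] axis_nth, simplified axis_def, simplified]
  note i216 = E[OF A, of 2 1 6, unfolded u8, simplified dv_def wedge2_def lam_def[symmetric] axis_nth, simplified axis_def, simplified]
  note i223 = E[OF A, of 2 2 3, unfolded u8, simplified dv_def wedge2_def lam_def[symmetric] axis_nth, simplified axis_def, simplified]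
  note i313 = E[OF A, of 3 1 3, unfolded u8, simplified dv_def wedge2_def lam_def[symmetric] axis_nth, simplified axis_def, simplified]
  note i314 = E[OF A, of 3 1 4, unfolded u8, simplified dv_def wedge2_def lam_def[symmetric] axis_nth, simplified axis_def, simplified]
  note i315 = E[OF A, of 3 1 5, unfolded u8, simplified dv_def wedge2_def lam_def[symmetric] axis_nth, simplified axis_def, simplified]
  note i316 = E[OF A, of 3 1 6, unfolded u8, simplified dv_def wedge2_def lam_def[symmetric] axis_nth, simplified axis_def, simplified]
  note i323 = E[OF A, of 3 2 3, unfolded u8, simplified dv_def wedge2_def lam_def[symmetric] axis_nth, simplified axis_def, simplified]
  note i412 = E[OF A, of 4 1 2, unfolded u8, simplified dv_def wedge2_def lam_def[symmetric] axis_nth, simplified axis_def, simplified]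
  note i413 = E[OF A, of 4 1 3, unfolded u8, simplified dv_def wedge2_def lam_def[symmetric] axis_nth, simplified axis_def, simplified]
  note i414 = E[OF A, of 4 1 4, unfolded u8, simplified dv_def wedge2_def lam_def[symmetric] axis_nth, simplified axis_def, simplified]
  note i415 = E[OF A, of 4 1 5, unfolded u8, simplified dv_def wedge2_def lam_def[symmetric] axis_nth, simplified axis_def, simplified]
  note i416 = E[OF A, of 4 1 6, unfolded u8, simplified dv_def wedge2_def lam_def[symmetric] axis_nth, simplified axis_def, simplified]
  note i423 = E[OF A, of 4 2 3, unfolded u8, simplified dv_def wedge2_def lam_def[symmetric] axis_nth, simplified axis_def, simplified]
  note i512 = E[OF A, of 5 1 2, unfolded u8, simplified dv_def wedge2_def lam_def[symmetric] axis_nth, simplified axis_def, simplified]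
  note i513 = E[OF A, of 5 1 3, unfolded u8, simplified dv_def wedge2_def lam_def[symmetric] axis_nth, simplified axis_def, simplified]
  note i514 = E[OF A, of 5 1 4, unfolded u8, simplified dv_def wedge2_def lam_def[symmetric] axis_nth, simplified axis_def, simplified]
  note i515 = E[OF A, of 5 1 5, unfolded u8, simplified dv_def wedge2_def lam_def[symmetric] axis_nth, simplified axis_def, simplified]
  note i516 = E[OF A, of 5 1 6, unfolded u8, simplified dv_def wedge2_def lam_def[symmetric] axis_nth, simplified axis_def, simplified]
  note i523 = E[OF A, of 5 2 3, unfolded u8, simplified dv_def wedge2_def lam_def[symmetric] axis_nth, simplified axis_def, simplified]
  note i612 = E[OF A, of 6 1 2, unfolded u8, simplified dv_def wedge2_def lam_def[symmetric] axis_nth, simplified axis_def, simplified]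
  note i613 = E[OF A, of 6 1 3, unfolded u8, simplified dv_def wedge2_def lam_def[symmetric] axis_nth, simplified axis_def, simplified]
  note i614 = E[OF A, of 6 1 4, unfolded u8, simplified dv_def wedge2_def lam_def[symmetric] axis_nth, simplified axis_def, simplified]
  note i615 = E[OF A, of 6 1 5, unfolded u8, simplified dv_def wedge2_def lam_def[symmetric] axis_nth, simplified axis_def, simplified]
  note i616 = E[OF A, of 6 1 6, unfolded u8, simplified dv_def wedge2_def lam_def[symmetric] axis_nth, simplified axis_def, simplified]
  note i623 = E[OF A, of 6 2 3, unfolded u8, simplified dv_def wedge2_def lam_def[symmetric] axis_nth, simplified axis_def, simplified]
  note i625 = E[OF A, of 6 2 5, unfolded u8, simplified dv_def wedge2_def lam_def[symmetric] axis_nth, simplified axis_def, simplified]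
  note i634 = E[OF A, of 6 3 4, unfolded u8, simplified dv_def wedge2_def lam_def[symmetric] axis_nth, simplified axis_def, simplified]
  note i635 = E[OF A, of 6 3 5, unfolded u8, simplified dv_def wedge2_def lam_def[symmetric] axis_nth, simplified axis_def, simplified]
  note i712 = E[OF A, of 7 1 2, unfolded u8, simplified dv_def wedge2_def lam_def[symmetric] axis_nth, simplified axis_def, simplified]
  note i714 = E[OF A, of 7 1 4, unfolded u8, simplified dv_def wedge2_def lam_def[symmetric] axis_nth, simplified axis_def, simplified]
  note i715 = E[OF A, of 7 1 5, unfolded u8, simplified dv_def wedge2_def lam_def[symmetric] axis_nth, simplified axis_def, simplified]
  note i716 = E[OF A, of 7 1 6, unfolded u8, simplified dv_def wedge2_def lam_def[symmetric] axis_nth, simplified axis_def, simplified]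
  note i723 = E[OF A, of 7 2 3, unfolded u8, simplified dv_def wedge2_def lam_def[symmetric] axis_nth, simplified axis_def, simplified]
  note i725 = E[OF A, of 7 2 5, unfolded u8, simplified dv_def wedge2_def lam_def[symmetric] axis_nth, simplified axis_def, simplified]
  note i734 = E[OF A, of 7 3 4, unfolded u8, simplified dv_def wedge2_def lam_def[symmetric] axis_nth, simplified axis_def, simplified]
  note i735 = E[OF A, of 7 3 5, unfolded u8, simplified dv_def wedge2_def lam_def[symmetric] axis_nth, simplified axis_def, simplified]
  note i814 = E[OF A, of 8 1 4, unfolded u8, simplified dv_def wedge2_def lam_def[symmetric] axis_nth, simplified axis_def, simplified]
  note i815 = E[OF A, of 8 1 5, unfolded u8, simplified dv_def wedge2_def lam_def[symmetric] axis_nth, simplified axis_def, simplified]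
  note i825 = E[OF A, of 8 2 5, unfolded u8, simplified dv_def wedge2_def lam_def[symmetric] axis_nth, simplified axis_def, simplified]
  note i834 = E[OF A, of 8 3 4, unfolded u8, simplified dv_def wedge2_def lam_def[symmetric] axis_nth, simplified axis_def, simplified]
  note i835 = E[OF A, of 8 3 5, unfolded u8, simplified dv_def wedge2_def lam_def[symmetric] axis_nth, simplified axis_def, simplified]
  note i845 = E[OF A, of 8 4 5, unfolded u8, simplified dv_def wedge2_def lam_def[symmetric] axis_nth, simplified axis_def, simplified]
  have z14: "lam f 1 4 = 0" using i113  by simp
  have z15: "lam f 1 5 = 0" using i123  by simp
  have z16: "lam f 1 6 = 0" using i114  by simp
  have z17: "lam f 1 7 = 0" using i115  by simp
  have z18: "lam f 1 8 = 0" using i116  by simp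
  have z24: "lam f 2 4 = 0" using i213  by simp
  have z25: "lam f 2 5 = 0" using i223  by simp
  have z26: "lam f 2 6 = 0" using i214  by simp
  have z27: "lam f 2 7 = 0" using i215  by simp
  have z28: "lam f 2 8 = 0" using i216  by simp
  have z34: "lam f 3 4 = 0" using i313  by simp
  have z35: "lam f 3 5 = 0" using i323  by simp
  have z36: "lam f 3 6 = 0" using i314  by simp
  have z37: "lam f 3 7 = 0" using i315  by simp
  have z38: "lam f 3 8 = 0" using i316  by simp
  have z46: "lam f 4 6 = 0" using i414 z14 z15 z16 z17 z18 z24 z25 z26 z27 z28 z34 z35 z36 z37 z38 by simp
  have z47: "lam f 4 7 = 0" using i415 z14 z15 z16 z17 z18 z24 z25 z26 z27 z28 z34 z35 z36 z37 z38 by simp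
  have z48: "lam f 4 8 = 0" using i416 z14 z15 z16 z17 z18 z24 z25 z26 z27 z28 z34 z35 z36 z37 z38 by simp
  have z56: "lam f 5 6 = 0" using i514 z14 z15 z16 z17 z18 z24 z25 z26 z27 z28 z34 z35 z36 z37 z38 by simp
  have z57: "lam f 5 7 = 0" using i515 z14 z15 z16 z17 z18 z24 z25 z26 z27 z28 z34 z35 z36 z37 z38 by simp
  have z58: "lam f 5 8 = 0" using i516 z14 z15 z16 z17 z18 z24 z25 z26 z27 z28 z34 z35 z36 z37 z38 by simp
  have c: "\<And>x i. f x $ i = (\<Sum>j\<in>{1,2,3,4,5,6,7,8}. x $ j * lam f i j)"
    using comp[OF lin] u8 by metis
  obtain x1 where h1: "f x1 = axis 1 1" using bj unfolding bij_def surj_def by metis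
  obtain x2 where h2: "f x2 = axis 2 1" using bj unfolding bij_def surj_def by metis
  obtain x3 where h3: "f x3 = axis 3 1" using bj unfolding bij_def surj_def by metis
  have m11: "lam f 1 1 * x1 $ 1 + lam f 1 2 * x1 $ 2 + lam f 1 3 * x1 $ 3 = 1"
    using c[of x1 1] h1 z14 z15 z16 z17 z18 z24 z25 z26 z27 z28 z34 z35 z36 z37 z38 z46 z47 z48 z56 z57 z58 by (simp add: axis_def mult.commute)
  have m12: "lam f 1 1 * x2 $ 1 + lam f 1 2 * x2 $ 2 + lam f 1 3 * x2 $ 3 = 0"
    using c[of x2 1] h2 z14 z15 z16 z17 z18 z24 z25 z26 z27 z28 z34 z35 z36 z37 z38 z46 z47 z48 z56 z57 z58 by (simp add: axis_def mult.commute)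
  have m13: "lam f 1 1 * x3 $ 1 + lam f 1 2 * x3 $ 2 + lam f 1 3 * x3 $ 3 = 0"
    using c[of x3 1] h3 z14 z15 z16 z17 z18 z24 z25 z26 z27 z28 z34 z35 z36 z37 z38 z46 z47 z48 z56 z57 z58 by (simp add: axis_def mult.commute)
  have m21: "lam f 2 1 * x1 $ 1 + lam f 2 2 * x1 $ 2 + lam f 2 3 * x1 $ 3 = 0"
    using c[of x1 2] h1 z14 z15 z16 z17 z18 z24 z25 z26 z27 z28 z34 z35 z36 z37 z38 z46 z47 z48 z56 z57 z58 by (simp add: axis_def mult.commute)
  have m22: "lam f 2 1 * x2 $ 1 + lam f 2 2 * x2 $ 2 + lam f 2 3 * x2 $ 3 = 1"
    using c[of x2 2] h2 z14 z15 z16 z17 z18 z24 z25 z26 z27 z28 z34 z35 z36 z37 z38 z46 z47 z48 z56 z57 z58 by (simp add: axis_def mult.commute)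
  have m23: "lam f 2 1 * x3 $ 1 + lam f 2 2 * x3 $ 2 + lam f 2 3 * x3 $ 3 = 0"
    using c[of x3 2] h3 z14 z15 z16 z17 z18 z24 z25 z26 z27 z28 z34 z35 z36 z37 z38 z46 z47 z48 z56 z57 z58 by (simp add: axis_def mult.commute)
  have m31: "lam f 3 1 * x1 $ 1 + lam f 3 2 * x1 $ 2 + lam f 3 3 * x1 $ 3 = 0"
    using c[of x1 3] h1 z14 z15 z16 z17 z18 z24 z25 z26 z27 z28 z34 z35 z36 z37 z38 z46 z47 z48 z56 z57 z58 by (simp add: axis_def mult.commute)
  have m32: "lam f 3 1 * x2 $ 1 + lam f 3 2 * x2 $ 2 + lam f 3 3 * x2 $ 3 = 0"
    using c[of x2 3] h2 z14 z15 z16 z17 z18 z24 z25 z26 z27 z28 z34 z35 z36 z37 z38 z46 z47 z48 z56 z57 z58 by (simp add: axis_def mult.commute)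
  have m33: "lam f 3 1 * x3 $ 1 + lam f 3 2 * x3 $ 2 + lam f 3 3 * x3 $ 3 = 1"
    using c[of x3 3] h3 z14 z15 z16 z17 z18 z24 z25 z26 z27 z28 z34 z35 z36 z37 z38 z46 z47 z48 z56 z57 z58 by (simp add: axis_def mult.commute)
  have "det3 (lam f 1 1) (lam f 1 2) (lam f 1 3) (lam f 2 1) (lam f 2 2) (lam f 2 3) (lam f 3 1) (lam f 3 2) (lam f 3 3) * det3 (x1 $ 1) (x2 $ 1) (x3 $ 1) (x1 $ 2) (x2 $ 2) (x3 $ 2) (x1 $ 3) (x2 $ 3) (x3 $ 3) = det3 1 0 0 0 1 0 0 0 1"
    using det3_mul[of "lam f 1 1" "lam f 1 2" "lam f 1 3" "lam f 2 1" "lam f 2 2" "lam f 2 3" "lam f 3 1" "lam f 3 2" "lam f 3 3" "x1 $ 1" "x2 $ 1" "x3 $ 1" "x1 $ 2" "x2 $ 2" "x3 $ 2" "x1 $ 3" "x2 $ 3" "x3 $ 3"] by (simp only: m11 m12 m13 m21 m22 m23 m31 m32 m33)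
  hence dA: "det3 (lam f 1 1) (lam f 1 2) (lam f 1 3) (lam f 2 1) (lam f 2 2) (lam f 2 3) (lam f 3 1) (lam f 3 2) (lam f 3 3) \<noteq> 0" by (auto simp: det3_def)
  have e1: "lam f 1 1*lam f 3 2 - lam f 1 2*lam f 3 1 = 0" using i412 z47 z14 z15 z16 z17 z18 z24 z25 z26 z27 z28 z34 z35 z36 z37 z38 z46 z47 z48 z56 z57 z58 by simp
  have e2: "lam f 2 1*lam f 3 2 - lam f 2 2*lam f 3 1 = 0" using i512 z57 z14 z15 z16 z17 z18 z24 z25 z26 z27 z28 z34 z35 z36 z37 z38 z46 z47 z48 z56 z57 z58 by simp
  have dex: "det3 (lam f 1 1) (lam f 1 2) (lam f 1 3) (lam f 2 1) (lam f 2 2) (lam f 2 3) (lam f 3 1) (lam f 3 2) (lam f 3 3) = lam f 3 3*(lam f 1 1*lam f 2 2 - lam f 1 2*lam f 2 1)" using e1 e2 unfolding det3_def by algebra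
  have g3: "lam f 3 3 \<noteq> 0" and D: "lam f 1 1*lam f 2 2 - lam f 1 2*lam f 2 1 \<noteq> 0" using dA dex by auto
  have "(lam f 1 1*lam f 2 2 - lam f 1 2*lam f 2 1)*lam f 3 1 = 0" using e1 e2 by algebra
  hence g1: "lam f 3 1 = 0" using D by simp
  have "(lam f 1 1*lam f 2 2 - lam f 1 2*lam f 2 1)*lam f 3 2 = 0" using e1 e2 by algebra
  hence g2: "lam f 3 2 = 0" using D by simp
  note W = z14 z15 z16 z17 z18 z24 z25 z26 z27 z28 z34 z35 z36 z37 z38 z46 z47 z48 z56 z57 z58 z46 z47 z48 z56 z57 z58 g1 g2
  have p4: "lam f 4 4 = lam f 1 1*lam f 3 3" using i413 W by simp
  have p5: "lam f 4 5 = lam f 1 2*lam f 3 3" using i423 W by simp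
  have q4: "lam f 5 4 = lam f 2 1*lam f 3 3" using i513 W by simp
  have q5: "lam f 5 5 = lam f 2 2*lam f 3 3" using i523 W by simp
  note P = p4 p5 q4 q5
  have r8: "lam f 6 8 = 0" using i616 W by simp
  have s8: "lam f 7 8 = 0" using i716 W by simp

  have "lam f 3 3*(lam f 1 1*lam f 1 1+lam f 2 1*lam f 2 1 - (lam f 1 2*lam f 1 2+lam f 2 2*lam f 2 2)) = 0" using dz[OF i614[simplified W P r8 s8]] dz[OF i625[simplified W P r8 s8]] by algebra
  hence E1: "lam f 1 1*lam f 1 1+lam f 2 1*lam f 2 1 - (lam f 1 2*lam f 1 2+lam f 2 2*lam f 2 2) = 0" using g3 by simp
  have "lam f 3 3*(lam f 1 2*lam f 1 2+lam f 2 2*lam f 2 2 + lam f 1 2*lam f 1 3 + lam f 2 2*lam f 2 3 - lam f 2 2*lam f 3 3) = 0" using dz[OF i625[simplified W P r8 s8]] dz[OF i635[simplified W P r8 s8]] by algebra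
  hence E2: "lam f 1 2*lam f 1 2+lam f 2 2*lam f 2 2 + lam f 1 2*lam f 1 3 + lam f 2 2*lam f 2 3 - lam f 2 2*lam f 3 3 = 0" using g3 by simp
  have "lam f 3 3*(lam f 1 1*lam f 1 2+lam f 2 1*lam f 2 2 - lam f 1 1*lam f 1 3 - lam f 2 1*lam f 2 3 + lam f 2 1*lam f 3 3) = 0" using dz[OF i615[simplified W P r8 s8]] dz[OF i634[simplified W P r8 s8]] by algebra
  hence E3: "lam f 1 1*lam f 1 2+lam f 2 1*lam f 2 2 - lam f 1 1*lam f 1 3 - lam f 2 1*lam f 2 3 + lam f 2 1*lam f 3 3 = 0" using g3 by simp
  have "lam f 3 3*(lam f 1 1*lam f 2 1 - lam f 1 2*lam f 2 2) = 0" using dz[OF i714[simplified W P r8 s8]] dz[OF i725[simplified W P r8 s8]] by algebra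
  hence E4: "lam f 1 1*lam f 2 1 - lam f 1 2*lam f 2 2 = 0" using g3 by simp
  have "lam f 3 3*(2*lam f 1 2*lam f 2 2 + lam f 1 3*lam f 2 2 + lam f 2 3*lam f 1 2 + lam f 3 3*lam f 1 2) = 0" using dz[OF i725[simplified W P r8 s8]] dz[OF i735[simplified W P r8 s8]] by algebra
  hence E5: "2*lam f 1 2*lam f 2 2 + lam f 1 3*lam f 2 2 + lam f 2 3*lam f 1 2 + lam f 3 3*lam f 1 2 = 0" using g3 by simp
  have "lam f 3 3*(lam f 1 1*lam f 2 2+lam f 1 2*lam f 2 1 - lam f 1 3*lam f 2 1 - lam f 2 3*lam f 1 1 - lam f 3 3*lam f 1 1) = 0" using dz[OF i715[simplified W P r8 s8]] dz[OF i734[simplified W P r8 s8]] by algebra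
  hence E6: "lam f 1 1*lam f 2 2+lam f 1 2*lam f 2 1 - lam f 1 3*lam f 2 1 - lam f 2 3*lam f 1 1 - lam f 3 3*lam f 1 1 = 0" using g3 by simp
  have s1: "(lam f 1 2+lam f 2 2)^2 = (lam f 1 1+lam f 2 1)^2" using E1 E4 by algebra
  have s2: "(lam f 1 2-lam f 2 2)^2 = (lam f 1 1-lam f 2 1)^2" using E1 E4 by algebra
  obtain e where e: "e = 1 \<or> e = -1" "lam f 1 2 = e*lam f 2 1" "lam f 2 2 = e*lam f 1 1"
    using signcase[OF s1 s2 D] by blast
  have ee: "e*e - 1 = 0" using e(1) by auto
  note ez = dz[OF e(2)] dz[OF e(3)]
  have S0: "lam f 1 1*lam f 1 3 + lam f 2 1*lam f 2 3 = 0" using E3 E5 ez ee by algebra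
  have T0: "lam f 1 3*lam f 2 1 + lam f 2 3*lam f 1 1 = 0" using E2 E6 ez ee by algebra
  have F1: "2*e*lam f 1 1*lam f 2 1 + lam f 3 3*lam f 2 1 = 0" using E3 E5 ez ee by algebra
  have F2: "e*(lam f 1 1*lam f 1 1+lam f 2 1*lam f 2 1) - lam f 1 1*lam f 3 3 = 0" using E2 E6 ez ee by algebra
  have B: "lam f 2 1*(3*lam f 1 1*lam f 1 1 + lam f 2 1*lam f 2 1) = 0" using F1 F2 ee by algebra
  have b1: "lam f 2 1 = 0"
  proof (rule ccontr)
    assume ne: "lam f 2 1 \<noteq> 0"
    hence "3*lam f 1 1*lam f 1 1 + lam f 2 1*lam f 2 1 = 0" using B by simp
    moreover have "lam f 2 1*lam f 2 1 > 0" using ne not_real_square_gt_zero by blast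
    moreover have "lam f 1 1*lam f 1 1 \<ge> 0" by simp
    ultimately show False by linarith
  qed
  have a2: "lam f 1 2 = 0" using e(2) b1 by simp
  have a1: "lam f 1 1 \<noteq> 0" using D e(3) a2 by auto
  have "lam f 1 1*(lam f 3 3 - e*lam f 1 1) = 0" using F2 b1 by (simp add: algebra_simps) (metis mult.commute)
  hence g3e: "lam f 3 3 = e*lam f 1 1" using a1 by simp
  have a3: "lam f 1 3 = 0" using S0 b1 a1 by simp
  have b3: "lam f 2 3 = 0" using T0 b1 a1 by simp
  note Sub = b1 a2 e(3) g3e a3 b3

  have "lam f 1 1*(lam f 4 2 - e*lam f 5 1) = 0" using dz[OF i612[simplified W P r8 s8 Sub]] dz[OF i615[simplified W P r8 s8 Sub]]  ee by algebra
  hence G1: "lam f 4 2 - e*lam f 5 1 = 0" using a1 by simp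
  have "lam f 1 1*lam f 1 1*(e*lam f 5 2 - lam f 4 1) = 0" using dz[OF i834[simplified W P r8 s8 Sub]] dz[OF i815[simplified W P r8 s8 Sub]] dz[OF i623[simplified W P r8 s8 Sub]]  ee by algebra
  hence G2: "e*lam f 5 2 - lam f 4 1 = 0" using a1 by simp
  have "lam f 1 1*lam f 1 1*(\<alpha>' - e*lam f 1 1*\<alpha>) = 0" using dz[OF i712[simplified W P r8 s8 Sub]] dz[OF i715[simplified W P r8 s8 Sub]] G2 ee by algebra
  hence G3: "\<alpha>' - e*lam f 1 1*\<alpha> = 0" using a1 by simp
  have "lam f 1 1*lam f 1 1*lam f 1 1*(\<beta>' - lam f 1 1*\<beta>) = 0" using dz[OF i814[simplified W P r8 s8 Sub]] dz[OF i613[simplified W P r8 s8 Sub]] dz[OF i835[simplified W P r8 s8 Sub]] dz[OF i825[simplified W P r8 s8 Sub]] dz[OF i723[simplified W P r8 s8 Sub]] dz[OF i845[simplified W P r8 s8 Sub]] G1 ee by algebra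
  hence G4: "\<beta>' - lam f 1 1*\<beta> = 0" using a1 by simp
  show ?thesis using G3 G4 e(1) by auto
qed

end
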